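(* Assume the univalence axiom. The map $\mathrm{AbSES}:\mathrm{AbGroup}^{\mathrm{op}}\to\mathrm{AbGroup}\to\mathrm{Type}$, which is functorial in the first variable by pullback and in the second variable by pushout, is a bifunctor: for every short exact sequence $E\in\mathrm{AbSES}(B,A)$ and all homomorphisms $f:A\to A'$ and $g:B'\to B$ there is a path $f_*(g^*(E)) = g^*(f_*(E))$ in $\mathrm{AbSES}(B',A')$.
   Context: We work in homotopy type theory with univalence. For abelian groups $A,B$, $\mathrm{AbSES}(B,A)$ is the type of short exact sequences $(E,i,p)$: $E$ an abelian group, $i:A\to E$ injective, $p:E\to B$ surjective, $p\circ i=0$, and $A\to\ker p$ surjective. For $g:B'\to B$, the pullback $g^*:\mathrm{AbSES}(B,A)\to\mathrm{AbSES}(B',A)$ replaces the middle group $E$ by $E\times_B B'=\{(e,b')\mid p(e)=g(b')\}$ with the evident maps. For $f:A\to A'$, the pushout $f_*:\mathrm{AbSES}(B,A)\to\mathrm{AbSES}(B,A')$ replaces $E$ by $(A'\oplus E)/\{(f(a),-i(a))\mid a\in A\}$ with the evident maps. *)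

theory Defs
  imports "HOL-Algebra.Algebra"
begin

text \<open>Abelian groups are HOL-Algebra commutative groups (structures of type 'x monoid).
A short exact sequence in AbSES(B,A) is a triple (E,i,p).\<close>

definition is_AbSES :: "'b monoid \<Rightarrow> 'a monoid \<Rightarrow> 'e monoid \<Rightarrow> ('a \<Rightarrow> 'e) \<Rightarrow> ('e \<Rightarrow> 'b) \<Rightarrow> bool" where
  "is_AbSES B A E i p \<longleftrightarrow>
     comm_group A \<and> comm_group B \<and> comm_group E \<and>
     i \<in> hom A E \<and> p \<in> hom E B \<and>
     inj_on i (carrier A) \<and>
     p ` carrier E = carrier B \<and>
     (\<forall>a \<in> carrier A. p (i a) = \<one>\<^bsub>B\<^esub>) \<and>
     kernel E B p \<subseteq> i ` carrier A"

definition pb_mid :: "'e monoid \<Rightarrow> ('e \<Rightarrow> 'b) \<Rightarrow> 'c monoid \<Rightarrow> ('c \<Rightarrow> 'b) \<Rightarrow> ('e \<times> 'c) monoid" where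
  "pb_mid E p B' g = (DirProd E B')
     \<lparr>carrier := {(e, b'). e \<in> carrier E \<and> b' \<in> carrier B' \<and> p e = g b'}\<rparr>"

definition pb_inc :: "('a \<Rightarrow> 'e) \<Rightarrow> 'c monoid \<Rightarrow> 'a \<Rightarrow> 'e \<times> 'c" where
  "pb_inc i B' a = (i a, \<one>\<^bsub>B'\<^esub>)"

definition pb_proj :: "'e \<times> 'c \<Rightarrow> 'c" where
  "pb_proj x = snd x"

definition po_sub :: "'a monoid \<Rightarrow> 'e monoid \<Rightarrow> ('a \<Rightarrow> 'e) \<Rightarrow> ('a \<Rightarrow> 'd) \<Rightarrow> ('d \<times> 'e) set" where
  "po_sub A E i f = (\<lambda>a. (f a, inv\<^bsub>E\<^esub> (i a))) ` carrier A"

definition po_mid :: "'a monoid \<Rightarrow> 'd monoid \<Rightarrow> 'e monoid \<Rightarrow> ('a \<Rightarrow> 'e) \<Rightarrow> ('a \<Rightarrow> 'd) \<Rightarrow> ('d \<times> 'e) set monoid" where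
  "po_mid A A' E i f = DirProd A' E Mod po_sub A E i f"

definition po_inc :: "'a monoid \<Rightarrow> 'd monoid \<Rightarrow> 'e monoid \<Rightarrow> ('a \<Rightarrow> 'e) \<Rightarrow> ('a \<Rightarrow> 'd) \<Rightarrow> 'd \<Rightarrow> ('d \<times> 'e) set" where
  "po_inc A A' E i f a' = r_coset (DirProd A' E) (po_sub A E i f) (a', \<one>\<^bsub>E\<^esub>)"

text \<open>Induced projection [(a',e)] \<mapsto> p e (well defined on cosets).\<close>
definition po_proj :: "('e \<Rightarrow> 'b) \<Rightarrow> ('d \<times> 'e) set \<Rightarrow> 'b" where
  "po_proj q S = the_elem ((\<lambda>x. q (snd x)) ` S)"

text \<open>Paths in AbSES(B,A) (by univalence): isomorphisms of middle groups commuting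
with the inclusions and projections.\<close>
definition AbSES_equiv ::
  "'a monoid \<Rightarrow> 'e1 monoid \<Rightarrow> ('a \<Rightarrow> 'e1) \<Rightarrow> ('e1 \<Rightarrow> 'b) \<Rightarrow>
   'e2 monoid \<Rightarrow> ('a \<Rightarrow> 'e2) \<Rightarrow> ('e2 \<Rightarrow> 'b) \<Rightarrow> bool" where
  "AbSES_equiv A E1 i1 p1 E2 i2 p2 \<longleftrightarrow>
     (\<exists>\<phi>. \<phi> \<in> iso E1 E2 \<and>
          (\<forall>a \<in> carrier A. \<phi> (i1 a) = i2 a) \<and>
          (\<forall>x \<in> carrier E1. p2 (\<phi> x) = p1 x))"

end

theory Submission imports Defs begin

lemma comm_group_DirProd:
  assumes "comm_group G" "comm_group H" shows "comm_group (G \<times>\<times> H)"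
proof -
  interpret G: comm_group G by fact
  interpret H: comm_group H by fact
  have "group (G \<times>\<times> H)" by (simp add: DirProd_group G.is_group H.is_group)
  then show ?thesis
    by (intro group.group_comm_groupI) (auto simp: G.m_comm H.m_comm)
qed

lemma eq_subgroup:
  assumes G1: "group G1" and G2: "group G2" and H: "group H"
    and h1: "h1 \<in> hom G1 H" and h2: "h2 \<in> hom G2 H"
  shows "subgroup {(x,y). x \<in> carrier G1 \<and> y \<in> carrier G2 \<and> h1 x = h2 y} (G1 \<times>\<times> G2)"
proof -
  interpret G1: group G1 by fact
  interpret G2: group G2 by fact
  interpret H: group H by fact
  interpret P: group "G1 \<times>\<times> G2" by (simp add: DirProd_group G1.is_group G2.is_group)
  interpret g1: group_hom G1 H h1 by (simp add: group_hom_def group_hom_axioms_def h1 G1.is_group H.is_group)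
  interpret g2: group_hom G2 H h2 by (simp add: group_hom_def group_hom_axioms_def h2 G2.is_group H.is_group)
  show ?thesis
  proof (rule P.subgroupI)
    show "{(x,y). x \<in> carrier G1 \<and> y \<in> carrier G2 \<and> h1 x = h2 y} \<subseteq> carrier (G1 \<times>\<times> G2)" by auto
    show "{(x,y). x \<in> carrier G1 \<and> y \<in> carrier G2 \<and> h1 x = h2 y} \<noteq> {}"
      using g1.hom_one g2.hom_one by (auto intro!: exI[of _ "\<one>\<^bsub>G1\<^esub>"] exI[of _ "\<one>\<^bsub>G2\<^esub>"])
  next
    fix a assume "a \<in> {(x,y). x \<in> carrier G1 \<and> y \<in> carrier G2 \<and> h1 x = h2 y}"
    then show "inv\<^bsub>G1 \<times>\<times> G2\<^esub> a \<in> {(x,y). x \<in> carrier G1 \<and> y \<in> carrier G2 \<and> h1 x = h2 y}"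
      by (auto simp: G1.is_group G2.is_group)
  next
    fix a b assume "a \<in> {(x,y). x \<in> carrier G1 \<and> y \<in> carrier G2 \<and> h1 x = h2 y}"
      "b \<in> {(x,y). x \<in> carrier G1 \<and> y \<in> carrier G2 \<and> h1 x = h2 y}"
    then show "a \<otimes>\<^bsub>G1 \<times>\<times> G2\<^esub> b \<in> {(x,y). x \<in> carrier G1 \<and> y \<in> carrier G2 \<and> h1 x = h2 y}"
      by auto
  qed
qed

lemma pb_mid_group:
  assumes "group E" "group B'" "group B" "p \<in> hom E B" "g \<in> hom B' B"
  shows "group (pb_mid E p B' g)"
  unfolding pb_mid_def
  using subgroup.subgroup_is_group[OF eq_subgroup[OF assms] DirProd_group[OF assms(1,2)]] .

lemma kernel_coset_image:
  assumes "group_hom G H h" "x \<in> carrier G"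
  shows "h ` (r_coset G (kernel G H h) x) = {h x}"
proof -
  interpret group_hom G H h by fact
  show ?thesis
  proof
    show "h ` (r_coset G (kernel G H h) x) \<subseteq> {h x}"
      using assms(2) by (auto simp: r_coset_def kernel_def)
    have "\<one>\<^bsub>G\<^esub> \<otimes>\<^bsub>G\<^esub> x \<in> r_coset G (kernel G H h) x"
      by (auto simp: r_coset_def kernel_def)
    then show "{h x} \<subseteq> h ` (r_coset G (kernel G H h) x)" using assms(2) by force
  qed
qed

lemma po_sub_subgroup:
  assumes A: "comm_group A" and A': "comm_group A'" and E: "comm_group E"
    and i: "i \<in> hom A E" and f: "f \<in> hom A A'"
  shows "subgroup (po_sub A E i f) (A' \<times>\<times> E)"
proof -
  interpret A: comm_group A by fact
  interpret A': comm_group A' by fact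
  interpret E: comm_group E by fact
  interpret P: group "A' \<times>\<times> E" by (simp add: DirProd_group A'.is_group E.is_group)
  interpret hi: group_hom A E i by (simp add: group_hom_def group_hom_axioms_def i A.is_group E.is_group)
  interpret hf: group_hom A A' f by (simp add: group_hom_def group_hom_axioms_def f A.is_group A'.is_group)
  show ?thesis unfolding po_sub_def
  proof (rule P.subgroupI)
    show "(\<lambda>a. (f a, inv\<^bsub>E\<^esub> i a)) ` carrier A \<subseteq> carrier (A' \<times>\<times> E)" by auto
    show "(\<lambda>a. (f a, inv\<^bsub>E\<^esub> i a)) ` carrier A \<noteq> {}" by auto
  next
    fix x assume "x \<in> (\<lambda>a. (f a, inv\<^bsub>E\<^esub> i a)) ` carrier A"
    then obtain a where a: "a \<in> carrier A" "x = (f a, inv\<^bsub>E\<^esub> i a)" by auto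
    then have "inv\<^bsub>A' \<times>\<times> E\<^esub> x = (f (inv\<^bsub>A\<^esub> a), inv\<^bsub>E\<^esub> i (inv\<^bsub>A\<^esub> a))"
      by (simp add: A'.is_group E.is_group)
    then show "inv\<^bsub>A' \<times>\<times> E\<^esub> x \<in> (\<lambda>a. (f a, inv\<^bsub>E\<^esub> i a)) ` carrier A"
      using a by (intro image_eqI[where x="inv\<^bsub>A\<^esub> a"]) auto
  next
    fix x y assume "x \<in> (\<lambda>a. (f a, inv\<^bsub>E\<^esub> i a)) ` carrier A" "y \<in> (\<lambda>a. (f a, inv\<^bsub>E\<^esub> i a)) ` carrier A"
    then obtain a b where a: "a \<in> carrier A" "x = (f a, inv\<^bsub>E\<^esub> i a)"
      and b: "b \<in> carrier A" "y = (f b, inv\<^bsub>E\<^esub> i b)" by auto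
    then have "x \<otimes>\<^bsub>A' \<times>\<times> E\<^esub> y = (f (a \<otimes>\<^bsub>A\<^esub> b), inv\<^bsub>E\<^esub> i (a \<otimes>\<^bsub>A\<^esub> b))"
      by (simp add: E.inv_mult)
    then show "x \<otimes>\<^bsub>A' \<times>\<times> E\<^esub> y \<in> (\<lambda>a. (f a, inv\<^bsub>E\<^esub> i a)) ` carrier A"
      using a b by (intro image_eqI[where x="a \<otimes>\<^bsub>A\<^esub> b"]) auto
  qed
qed

lemma po_proj_coset:
  assumes A: "comm_group A" and A': "comm_group A'" and E: "comm_group E" and B: "comm_group B"
    and i: "i \<in> hom A E" and f: "f \<in> hom A A'" and p: "p \<in> hom E B"
    and pi: "\<forall>a \<in> carrier A. p (i a) = \<one>\<^bsub>B\<^esub>"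
    and x: "a' \<in> carrier A'" "e \<in> carrier E"
  shows "po_proj p (r_coset (A' \<times>\<times> E) (po_sub A E i f) (a', e)) = p e"
proof -
  interpret A: comm_group A by fact
  interpret A': comm_group A' by fact
  interpret E: comm_group E by fact
  interpret B: comm_group B by fact
  interpret hi: group_hom A E i by (simp add: group_hom_def group_hom_axioms_def i A.is_group E.is_group)
  interpret hp: group_hom E B p by (simp add: group_hom_def group_hom_axioms_def p B.is_group E.is_group)
  interpret hf: group_hom A A' f by (simp add: group_hom_def group_hom_axioms_def f A.is_group A'.is_group)
  have "(\<lambda>x. p (snd x)) ` (r_coset (A' \<times>\<times> E) (po_sub A E i f) (a', e)) = {p e}"
  proof
    show "(\<lambda>x. p (snd x)) ` (r_coset (A' \<times>\<times> E) (po_sub A E i f) (a', e)) \<subseteq> {p e}"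
      using x pi by (auto simp: r_coset_def po_sub_def hp.hom_inv)
    have "(\<one>\<^bsub>A'\<^esub> \<otimes>\<^bsub>A'\<^esub> a', inv\<^bsub>E\<^esub> \<one>\<^bsub>E\<^esub> \<otimes>\<^bsub>E\<^esub> e) \<in> r_coset (A' \<times>\<times> E) (po_sub A E i f) (a', e)"
      unfolding r_coset_def po_sub_def
      by (rule UN_I[where a="(f \<one>\<^bsub>A\<^esub>, inv\<^bsub>E\<^esub> i \<one>\<^bsub>A\<^esub>)"]) (auto intro!: image_eqI[where x="\<one>\<^bsub>A\<^esub>"])
    then show "{p e} \<subseteq> (\<lambda>x. p (snd x)) ` (r_coset (A' \<times>\<times> E) (po_sub A E i f) (a', e))"
      using x by force
  qed
  then show ?thesis by (simp add: po_proj_def)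
qed

lemma po_proj_hom:
  assumes A: "comm_group A" and A': "comm_group A'" and E: "comm_group E" and B: "comm_group B"
    and i: "i \<in> hom A E" and f: "f \<in> hom A A'" and p: "p \<in> hom E B"
    and pi: "\<forall>a \<in> carrier A. p (i a) = \<one>\<^bsub>B\<^esub>"
  shows "po_proj p \<in> hom (A' \<times>\<times> E Mod po_sub A E i f) B"
proof -
  interpret E: comm_group E by fact
  interpret A': comm_group A' by fact
  interpret hp: group_hom E B p by (simp add: group_hom_def group_hom_axioms_def p B comm_group.axioms E.is_group)
  interpret P: comm_group "A' \<times>\<times> E" by (rule comm_group_DirProd[OF A' E])
  have N: "po_sub A E i f \<lhd> A' \<times>\<times> E"
    by (rule P.subgroup_imp_normal[OF po_sub_subgroup[OF A A' E i f]])
  note L = po_proj_coset[OF A A' E B i f p pi]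
  show ?thesis
  proof (rule homI)
    fix C assume "C \<in> carrier (A' \<times>\<times> E Mod po_sub A E i f)"
    then obtain a e where "a \<in> carrier A'" "e \<in> carrier E" "C = r_coset (A' \<times>\<times> E) (po_sub A E i f) (a, e)"
      by (auto simp: carrier_FactGroup)
    then show "po_proj p C \<in> carrier B" using L by simp
  next
    fix C D assume "C \<in> carrier (A' \<times>\<times> E Mod po_sub A E i f)" "D \<in> carrier (A' \<times>\<times> E Mod po_sub A E i f)"
    then obtain a e a2 e2 where x: "a \<in> carrier A'" "e \<in> carrier E" "C = r_coset (A' \<times>\<times> E) (po_sub A E i f) (a, e)"
      and y: "a2 \<in> carrier A'" "e2 \<in> carrier E" "D = r_coset (A' \<times>\<times> E) (po_sub A E i f) (a2, e2)"
      by (auto simp: carrier_FactGroup)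
    have "C \<otimes>\<^bsub>A' \<times>\<times> E Mod po_sub A E i f\<^esub> D = r_coset (A' \<times>\<times> E) (po_sub A E i f) (a \<otimes>\<^bsub>A'\<^esub> a2, e \<otimes>\<^bsub>E\<^esub> e2)"
      using normal.rcos_sum[OF N, of "(a,e)" "(a2,e2)"] x y by simp
    then show "po_proj p (C \<otimes>\<^bsub>A' \<times>\<times> E Mod po_sub A E i f\<^esub> D) = po_proj p C \<otimes>\<^bsub>B\<^esub> po_proj p D"
      using x y L by simp
  qed
qed

theorem proposition9:
  fixes A :: "'a monoid" and A' :: "'d monoid" and B :: "'b monoid" and B' :: "'c monoid"
    and E :: "'e monoid" and i :: "'a \<Rightarrow> 'e" and p :: "'e \<Rightarrow> 'b"
    and f :: "'a \<Rightarrow> 'd" and g :: "'c \<Rightarrow> 'b"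
  assumes "is_AbSES B A E i p"
    and "comm_group A'" and "comm_group B'"
    and "f \<in> hom A A'" and "g \<in> hom B' B"
  shows "AbSES_equiv A'
           (po_mid A A' (pb_mid E p B' g) (pb_inc i B') f)
           (po_inc A A' (pb_mid E p B' g) (pb_inc i B') f)
           (po_proj pb_proj)
           (pb_mid (po_mid A A' E i f) (po_proj p) B' g)
           (pb_inc (po_inc A A' E i f) B')
           pb_proj"
proof -
  have cA: "comm_group A" and cB: "comm_group B" and cE: "comm_group E"
    and i: "i \<in> hom A E" and p: "p \<in> hom E B"
    and pi: "\<forall>a \<in> carrier A. p (i a) = \<one>\<^bsub>B\<^esub>"
    using assms(1) by (auto simp: is_AbSES_def)
  note cA' = assms(2) and cB' = assms(3) and f = assms(4) and g = assms(5)
  interpret A: comm_group A by fact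
  interpret A': comm_group A' by fact
  interpret B: comm_group B by fact
  interpret B': comm_group B' by fact
  interpret E: comm_group E by fact
  interpret hi: group_hom A E i by (simp add: group_hom_def group_hom_axioms_def i A.is_group E.is_group)
  interpret hp: group_hom E B p by (simp add: group_hom_def group_hom_axioms_def p B.is_group E.is_group)
  interpret hf: group_hom A A' f by (simp add: group_hom_def group_hom_axioms_def f A.is_group A'.is_group)
  interpret hg: group_hom B' B g by (simp add: group_hom_def group_hom_axioms_def g B.is_group B'.is_group)
  define P where "P = pb_mid E p B' g"
  have gP: "group P" unfolding P_def by (rule pb_mid_group) (auto simp: p g)
  have carrP: "carrier P = {(e, b). e \<in> carrier E \<and> b \<in> carrier B' \<and> p e = g b}"
    and multP: "\<And>x y. x \<otimes>\<^bsub>P\<^esub> y = x \<otimes>\<^bsub>E \<times>\<times> B'\<^esub> y"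
    and oneP: "\<one>\<^bsub>P\<^esub> = (\<one>\<^bsub>E\<^esub>, \<one>\<^bsub>B'\<^esub>)"
    by (simp_all add: P_def pb_mid_def DirProd_def)
  define G where "G = A' \<times>\<times> P"
  have gG: "group G" unfolding G_def by (simp add: DirProd_group gP A'.is_group)
  define S2 where "S2 = po_sub A E i f"
  interpret PE: comm_group "A' \<times>\<times> E" by (rule comm_group_DirProd[OF cA' cE])
  have N2: "S2 \<lhd> A' \<times>\<times> E" unfolding S2_def
    by (rule PE.subgroup_imp_normal[OF po_sub_subgroup[OF cA cA' cE i f]])
  have sub2: "subgroup S2 (A' \<times>\<times> E)" using N2 normal_imp_subgroup by blast
  define Q where "Q = A' \<times>\<times> E Mod S2"
  have gQ: "group Q" unfolding Q_def using N2 normal.factorgroup_is_group by blast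
  have q: "po_proj p \<in> hom Q B" unfolding Q_def S2_def by (rule po_proj_hom[OF cA cA' cE cB i f p pi])
  have L: "\<And>a e. a \<in> carrier A' \<Longrightarrow> e \<in> carrier E \<Longrightarrow> po_proj p (r_coset (A' \<times>\<times> E) S2 (a, e)) = p e"
    unfolding S2_def by (rule po_proj_coset[OF cA cA' cE cB i f p pi])
  define Y where "Y = pb_mid Q (po_proj p) B' g"
  have gY: "group Y" unfolding Y_def by (rule pb_mid_group) (auto simp: gQ q g)
  have carrY: "carrier Y = {(C, b). C \<in> carrier Q \<and> b \<in> carrier B' \<and> po_proj p C = g b}"
    and multY: "\<And>x y. x \<otimes>\<^bsub>Y\<^esub> y = x \<otimes>\<^bsub>Q \<times>\<times> B'\<^esub> y"
    and oneY: "\<one>\<^bsub>Y\<^esub> = (S2, \<one>\<^bsub>B'\<^esub>)"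
    by (simp_all add: Y_def pb_mid_def DirProd_def Q_def)
  define \<psi> :: "'d \<times> 'e \<times> 'c \<Rightarrow> ('d \<times> 'e) set \<times> 'c" where "\<psi> = (\<lambda>x. (r_coset (A' \<times>\<times> E) S2 (fst x, fst (snd x)), snd (snd x)))"
  have \<psi>hom: "\<psi> \<in> hom G Y"
  proof (rule homI)
    fix x assume "x \<in> carrier G"
    then show "\<psi> x \<in> carrier Y"
      by (auto simp: G_def carrP carrY \<psi>_def Q_def carrier_FactGroup L)
  next
    fix x y assume "x \<in> carrier G" "y \<in> carrier G"
    then obtain a e b a2 e2 b2 where x: "x = (a, (e, b))" "a \<in> carrier A'" "e \<in> carrier E" "b \<in> carrier B'"
      and y: "y = (a2, (e2, b2))" "a2 \<in> carrier A'" "e2 \<in> carrier E" "b2 \<in> carrier B'"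
      by (auto simp: G_def carrP)
    have "r_coset (A' \<times>\<times> E) S2 (a, e) <#>\<^bsub>A' \<times>\<times> E\<^esub> r_coset (A' \<times>\<times> E) S2 (a2, e2)
        = r_coset (A' \<times>\<times> E) S2 (a \<otimes>\<^bsub>A'\<^esub> a2, e \<otimes>\<^bsub>E\<^esub> e2)"
      using normal.rcos_sum[OF N2, of "(a,e)" "(a2,e2)"] x y by simp
    then show "\<psi> (x \<otimes>\<^bsub>G\<^esub> y) = \<psi> x \<otimes>\<^bsub>Y\<^esub> \<psi> y"
      using x y by (simp add: \<psi>_def G_def multP multY Q_def)
  qed
  interpret h\<psi>: group_hom G Y \<psi> by (simp add: group_hom_def group_hom_axioms_def \<psi>hom gG gY)
  have surj: "\<psi> ` carrier G = carrier Y"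
  proof
    show "\<psi> ` carrier G \<subseteq> carrier Y" using \<psi>hom by (auto simp: hom_def)
    show "carrier Y \<subseteq> \<psi> ` carrier G"
    proof
      fix y assume "y \<in> carrier Y"
      then obtain a e b where y: "y = (r_coset (A' \<times>\<times> E) S2 (a, e), b)" "a \<in> carrier A'" "e \<in> carrier E"
        "b \<in> carrier B'" "po_proj p (r_coset (A' \<times>\<times> E) S2 (a, e)) = g b"
        by (auto simp: carrY Q_def carrier_FactGroup)
      then have "p e = g b" using L by simp
      then have "(a, (e, b)) \<in> carrier G" using y by (simp add: G_def carrP)
      moreover have "\<psi> (a, (e, b)) = y" using y by (simp add: \<psi>_def)
      ultimately show "y \<in> \<psi> ` carrier G" by force
    qed
  qed
  have invP: "\<And>a. a \<in> carrier A \<Longrightarrow> inv\<^bsub>P\<^esub> (pb_inc i B' a) = (inv\<^bsub>E\<^esub> i a, \<one>\<^bsub>B'\<^esub>)"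
  proof -
    fix a assume a: "a \<in> carrier A"
    have "(inv\<^bsub>E\<^esub> i a, \<one>\<^bsub>B'\<^esub>) \<in> carrier P" "pb_inc i B' a \<in> carrier P"
      using a pi by (auto simp: carrP pb_inc_def hp.hom_inv)
    moreover have "(inv\<^bsub>E\<^esub> i a, \<one>\<^bsub>B'\<^esub>) \<otimes>\<^bsub>P\<^esub> pb_inc i B' a = \<one>\<^bsub>P\<^esub>"
      using a by (simp add: multP oneP pb_inc_def)
    ultimately show "inv\<^bsub>P\<^esub> (pb_inc i B' a) = (inv\<^bsub>E\<^esub> i a, \<one>\<^bsub>B'\<^esub>)"
      using group.inv_equality[OF gP] by metis
  qed
  have ker: "kernel G Y \<psi> = po_sub A P (pb_inc i B') f"
  proof
    show "kernel G Y \<psi> \<subseteq> po_sub A P (pb_inc i B') f"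
    proof
      fix x assume "x \<in> kernel G Y \<psi>"
      then obtain a e b where x: "x = (a, (e, b))" "a \<in> carrier A'" "e \<in> carrier E" "b \<in> carrier B'"
        and k: "r_coset (A' \<times>\<times> E) S2 (a, e) = S2" "b = \<one>\<^bsub>B'\<^esub>"
        by (auto simp: kernel_def G_def carrP \<psi>_def oneY)
      have "(a, e) \<in> S2"
        using group.rcos_self[OF PE.is_group _ sub2, of "(a,e)"] x k by simp
      then obtain a0 where a0: "a0 \<in> carrier A" "a = f a0" "e = inv\<^bsub>E\<^esub> i a0"
        by (auto simp: S2_def po_sub_def)
      show "x \<in> po_sub A P (pb_inc i B') f"
        unfolding po_sub_def using a0 x k invP
        by (intro image_eqI[where x=a0]) auto
    qed
    show "po_sub A P (pb_inc i B') f \<subseteq> kernel G Y \<psi>"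
    proof
      fix x assume "x \<in> po_sub A P (pb_inc i B') f"
      then obtain a0 where a0: "a0 \<in> carrier A" "x = (f a0, (inv\<^bsub>E\<^esub> i a0, \<one>\<^bsub>B'\<^esub>))"
        using invP by (auto simp: po_sub_def)
      have inS2: "(f a0, inv\<^bsub>E\<^esub> i a0) \<in> S2" using a0 by (auto simp: S2_def po_sub_def)
      have "r_coset (A' \<times>\<times> E) S2 (f a0, inv\<^bsub>E\<^esub> i a0) = S2"
        using subgroup.rcos_const[OF sub2 PE.is_group inS2] .
      moreover have "x \<in> carrier G" using a0 pi by (auto simp: G_def carrP hp.hom_inv)
      ultimately show "x \<in> kernel G Y \<psi>" using a0 by (simp add: kernel_def \<psi>_def oneY)
    qed
  qed
  have iso: "(\<lambda>Z. the_elem (\<psi> ` Z)) \<in> iso (G Mod kernel G Y \<psi>) Y"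
    by (rule h\<psi>.FactGroup_iso_set[OF surj])
  have img: "\<And>x. x \<in> carrier G \<Longrightarrow> \<psi> ` (r_coset G (po_sub A P (pb_inc i B') f) x) = {\<psi> x}"
    using kernel_coset_image[OF h\<psi>.group_hom_axioms] unfolding ker by blast
  show ?thesis
    unfolding AbSES_equiv_def
  proof (intro exI conjI ballI)
    show "(\<lambda>Z. the_elem (\<psi> ` Z)) \<in> iso (po_mid A A' (pb_mid E p B' g) (pb_inc i B') f)
        (pb_mid (po_mid A A' E i f) (po_proj p) B' g)"
      using iso unfolding ker by (simp add: po_mid_def G_def P_def Y_def Q_def S2_def)
  next
    fix a assume a: "a \<in> carrier A'"
    have "(a, \<one>\<^bsub>P\<^esub>) \<in> carrier G" using a by (simp add: G_def gP group.is_monoid monoid.one_closed)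
    then have "the_elem (\<psi> ` po_inc A A' (pb_mid E p B' g) (pb_inc i B') f a) = \<psi> (a, \<one>\<^bsub>P\<^esub>)"
      using img[of "(a, \<one>\<^bsub>P\<^esub>)"] by (simp add: po_inc_def G_def P_def)
    then show "the_elem (\<psi> ` po_inc A A' (pb_mid E p B' g) (pb_inc i B') f a) =
        pb_inc (po_inc A A' E i f) B' a"
      by (simp add: \<psi>_def oneP pb_inc_def po_inc_def S2_def)
  next
    fix Z assume "Z \<in> carrier (po_mid A A' (pb_mid E p B' g) (pb_inc i B') f)"
    then obtain x where x: "x \<in> carrier G" "Z = r_coset G (po_sub A P (pb_inc i B') f) x"
      by (auto simp: po_mid_def G_def P_def carrier_FactGroup)
    have "(\<lambda>y. pb_proj (snd y)) ` Z = snd ` (\<psi> ` Z)"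
      by (auto simp: image_image \<psi>_def pb_proj_def)
    then have "(\<lambda>y. pb_proj (snd y)) ` Z = {snd (\<psi> x)}" using img x by simp
    then show "pb_proj (the_elem (\<psi> ` Z)) = po_proj pb_proj Z"
      using img x by (simp add: po_proj_def pb_proj_def)
  qed
qed

end
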